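(* In the setting described in the context, there does not exist a preorder that rationalizes $g$. Moreover, any binary relation $\precsim$ on $\hat{\mathscr{T}}$ that rationalizes $g$ contains a cycle of the form $T_0\prec T_1\sim T_2\prec T_3\sim T_0$ for some $T_0,T_1,T_2,T_3\in\hat{\mathscr{T}}$.
   Context: Agents $i\in[0,1]$ (Lebesgue measure) have an observable characteristic $x_i\in\{E,I,W\}$: $x_i=E$ for $i\in[0,1/3)$, $x_i=I$ for $i\in[1/3,2/3]$, $x_i=W$ for $i\in(2/3,1]$; there are no unobservable characteristics. Incomes lie in $Z=[0,\bar z]$ with $\bar z>1$. Every agent has cost of earning income $v(z)=\frac12 z^2$ and utility $u(c-v(z))$, $u$ strictly increasing, concave, twice continuously differentiable. Tax policies $T:Z\times\{E,I,W\}\to\mathbb{R}$ may depend on income and the characteristic, with continuous first and second $z$-derivatives; $T_i(z)=T(z;x_i)$. The admissible set $\hat{\mathscr{T}}$ is an open set of such policies (in the norm $\max\{|T|+|\partial_zT|+|\partial_z^2T|\}$) containing all policies strictly convex in $z$ and all policies that, for each characteristic, are affine in $z$ with slope in $[0,1]$, such that for all $T\in\hat{\mathscr{T}}$ each agent has a unique optimal income $z_i(T)\in\arg\max_z z-T_i(z)-v(z)$. Revenue is $R(T)=\int_0^1T_i(z_i(T))\,di$. Welfare weights are libertarian and common to all agents: $g_i(c,z)=g(z-c)$ where $g>0$ is differentiable with $g'>0$ (weights increase in tax paid $t=z-c$); $g_i(T)=g(z_i(T)-c_i)$ with $c_i=z_i(T)-T_i(z_i(T))$. Paths: continuous $\rho:[a,b]\to\hat{\mathscr{T}}$,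 $\theta\mapsto T^{\rho,\theta}$, $a<0<1<b$, with $T^\rho_i(z,\theta)=T^{\rho,\theta}_i(z)$, $z^\rho_i(\theta)=z_i(T^{\rho,\theta})$, such that $(z,\theta)\mapsto T^\rho_i(z,\theta)$ is continuously differentiable for all $i$, for each $\theta$ only finitely many $i_0$ are discontinuity points of $i\mapsto\partial_\theta T^\rho_i(z,\theta)$ for some $z$, and $R(T^{\rho,\theta})=R(T^{\rho,0})$ for all $\theta$; $P$ is the set of such paths. A binary relation $\precsim$ (asymmetric part $\prec$, symmetric part $\sim$) rationalizes $g$ if for all $\rho\in P$: if $\int g_i(T^{\rho,0})\partial_\theta|_{\theta=0}T^\rho_i(z^\rho_i(0),\theta)\,di<0$ then $\exists\bar\theta\in(0,1]$ with $T^{\rho,0}\prec T^{\rho,\theta}$ for all $\theta\in(0,\bar\theta)$; if it is $>0$ then $\exists\bar\theta\in(0,1]$ with $T^{\rho,0}\succ T^{\rho,\theta}$ for all $\theta\in(0,\bar\theta)$; and if $\int g_i(T^{\rho,\theta'})\partial_\theta|_{\theta=\theta'}T^\rho_i(z^\rho_i(\theta'),\theta)\,di=0$ for all $\theta'\in[0,1]$ then $T^{\rho,0}\sim T^{\rho,1}$. A preorder is a reflexive transitive relation. *)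

theory Defs
  imports "HOL-Analysis.Analysis"
begin

datatype charac = E | I | W

definition xch :: "real \<Rightarrow> charac" where
  "xch i = (if i < 1/3 then E else if i \<le> 2/3 then I else W)"

abbreviation Zs :: "real \<Rightarrow> real set" where
  "Zs zbar \<equiv> {0..zbar}"

definition vcost :: "real \<Rightarrow> real" where
  "vcost z = z^2 / 2"

text \<open>A tax policy is represented as T :: real => charac => real, T z k being the tax
  at income z for characteristic k; only the values on Z matter, and we normalise
  them to 0 outside Z.  T_i(z) = T z (xch i).\<close>

type_synonym policy = "real \<Rightarrow> charac \<Rightarrow> real"

definition dZ :: "real \<Rightarrow> (real \<Rightarrow> real) \<Rightarrow> real \<Rightarrow> real" where
  "dZ zbar f z = (SOME d. (f has_real_derivative d) (at z within Zs zbar))"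

definition C2_on :: "real set \<Rightarrow> (real \<Rightarrow> real) \<Rightarrow> bool" where
  "C2_on S f \<longleftrightarrow> (\<exists>f' f''. (\<forall>z\<in>S. (f has_real_derivative f' z) (at z within S))
      \<and> (\<forall>z\<in>S. (f' has_real_derivative f'' z) (at z within S))
      \<and> continuous_on S f'')"

definition is_policy :: "real \<Rightarrow> policy \<Rightarrow> bool" where
  "is_policy zbar T \<longleftrightarrow> (\<forall>k. C2_on (Zs zbar) (\<lambda>z. T z k) \<and> (\<forall>z. z \<notin> Zs zbar \<longrightarrow> T z k = 0))"

definition pnorm :: "real \<Rightarrow> policy \<Rightarrow> real" where
  "pnorm zbar T = Sup {\<bar>T z k\<bar> + \<bar>dZ zbar (\<lambda>y. T y k) z\<bar> + \<bar>dZ zbar (dZ zbar (\<lambda>y. T y k)) z\<bar>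
                       | z k. z \<in> Zs zbar}"

definition pdist :: "real \<Rightarrow> policy \<Rightarrow> policy \<Rightarrow> real" where
  "pdist zbar T T' = pnorm zbar (\<lambda>z k. T z k - T' z k)"

definition open_policies :: "real \<Rightarrow> policy set \<Rightarrow> bool" where
  "open_policies zbar A \<longleftrightarrow> A \<subseteq> {T. is_policy zbar T} \<and>
     (\<forall>T\<in>A. \<exists>\<epsilon>>0. \<forall>T'. is_policy zbar T' \<and> pdist zbar T' T < \<epsilon> \<longrightarrow> T' \<in> A)"

definition strictly_convex_on :: "real set \<Rightarrow> (real \<Rightarrow> real) \<Rightarrow> bool" where
  "strictly_convex_on S f \<longleftrightarrow> (\<forall>x\<in>S. \<forall>y\<in>S. \<forall>t::real. x \<noteq> y \<and> 0 < t \<and> t < 1 \<longrightarrow>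
      f (t * x + (1 - t) * y) < t * f x + (1 - t) * f y)"

definition obj :: "policy \<Rightarrow> charac \<Rightarrow> real \<Rightarrow> real" where
  "obj T k z = z - T z k - vcost z"

definition is_opt :: "real \<Rightarrow> policy \<Rightarrow> charac \<Rightarrow> real \<Rightarrow> bool" where
  "is_opt zbar T k z \<longleftrightarrow> z \<in> Zs zbar \<and> (\<forall>z'\<in>Zs zbar. obj T k z' \<le> obj T k z)"

text \<open>Optimal income z_i(T) of agent i (well defined on the admissible set).\<close>
definition zopt :: "real \<Rightarrow> policy \<Rightarrow> real \<Rightarrow> real" where
  "zopt zbar T i = (THE z. is_opt zbar T (xch i) z)"

definition admissible :: "real \<Rightarrow> policy set \<Rightarrow> bool" where
  "admissible zbar A \<longleftrightarrow> open_policies zbar A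
     \<and> (\<forall>T. is_policy zbar T \<and> (\<forall>k. strictly_convex_on (Zs zbar) (\<lambda>z. T z k)) \<longrightarrow> T \<in> A)
     \<and> (\<forall>T. is_policy zbar T \<and> (\<forall>k. \<exists>a b. 0 \<le> b \<and> b \<le> 1 \<and> (\<forall>z\<in>Zs zbar. T z k = a + b * z))
            \<longrightarrow> T \<in> A)
     \<and> (\<forall>T\<in>A. \<forall>i\<in>{0..1}. \<exists>!z. is_opt zbar T (xch i) z)"

definition revenue :: "real \<Rightarrow> policy \<Rightarrow> real" where
  "revenue zbar T = integral {0..1} (\<lambda>i. T (zopt zbar T i) (xch i))"

definition gw :: "(real \<Rightarrow> real) \<Rightarrow> real \<Rightarrow> policy \<Rightarrow> real \<Rightarrow> real" where
  "gw g zbar T i = (let z = zopt zbar T i; c = z - T z (xch i) in g (z - c))"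

text \<open>A path rho : [a,b] -> admissible set, represented as P theta = T^{rho,theta}.\<close>
definition is_path :: "real \<Rightarrow> policy set \<Rightarrow> real \<Rightarrow> real \<Rightarrow> (real \<Rightarrow> policy) \<Rightarrow> bool" where
  "is_path zbar A a b P \<longleftrightarrow> a < 0 \<and> 1 < b
     \<and> (\<forall>\<theta>\<in>{a..b}. P \<theta> \<in> A)
     \<and> (\<forall>\<theta>\<in>{a..b}. \<forall>\<epsilon>>0. \<exists>\<delta>>0. \<forall>\<theta>'\<in>{a..b}. \<bar>\<theta>' - \<theta>\<bar> < \<delta> \<longrightarrow> pdist zbar (P \<theta>') (P \<theta>) < \<epsilon>)
     \<and> (\<forall>i\<in>{0..1}. \<exists>fz ft.
          continuous_on (Zs zbar \<times> {a..b}) fz \<and> continuous_on (Zs zbar \<times> {a..b}) ft \<and>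
          (\<forall>p\<in>Zs zbar \<times> {a..b}.
             ((\<lambda>(z, t). P t z (xch i)) has_derivative (\<lambda>(dz, dt). fz p * dz + ft p * dt))
               (at p within Zs zbar \<times> {a..b})))
     \<and> (\<forall>\<theta>\<in>{a..b}. finite {i0 \<in> {0..1}. \<exists>z\<in>Zs zbar.
           \<not> continuous (at i0 within {0..1}) (\<lambda>i. deriv (\<lambda>t. P t z (xch i)) \<theta>)})
     \<and> (\<forall>\<theta>\<in>{a..b}. revenue zbar (P \<theta>) = revenue zbar (P 0))"

definition weff :: "(real \<Rightarrow> real) \<Rightarrow> real \<Rightarrow> (real \<Rightarrow> policy) \<Rightarrow> real \<Rightarrow> real" where
  "weff g zbar P \<theta>' = integral {0..1}
      (\<lambda>i. gw g zbar (P \<theta>') i * deriv (\<lambda>t. P t (zopt zbar (P \<theta>') i) (xch i)) \<theta>')"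

definition sprec :: "(policy \<Rightarrow> policy \<Rightarrow> bool) \<Rightarrow> policy \<Rightarrow> policy \<Rightarrow> bool" where
  "sprec R S T \<longleftrightarrow> R S T \<and> \<not> R T S"

definition ssim :: "(policy \<Rightarrow> policy \<Rightarrow> bool) \<Rightarrow> policy \<Rightarrow> policy \<Rightarrow> bool" where
  "ssim R S T \<longleftrightarrow> R S T \<and> R T S"

definition rationalizes ::
  "real \<Rightarrow> policy set \<Rightarrow> (real \<Rightarrow> real) \<Rightarrow> (policy \<Rightarrow> policy \<Rightarrow> bool) \<Rightarrow> bool" where
  "rationalizes zbar A g R \<longleftrightarrow> (\<forall>a b P. is_path zbar A a b P \<longrightarrow>
      (weff g zbar P 0 < 0 \<longrightarrow>
         (\<exists>\<theta>b\<in>{0<..1}. \<forall>\<theta>\<in>{0<..<\<theta>b}. sprec R (P 0) (P \<theta>)))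
    \<and> (weff g zbar P 0 > 0 \<longrightarrow>
         (\<exists>\<theta>b\<in>{0<..1}. \<forall>\<theta>\<in>{0<..<\<theta>b}. sprec R (P \<theta>) (P 0)))
    \<and> ((\<forall>\<theta>'\<in>{0..1}. weff g zbar P \<theta>' = 0) \<longrightarrow> ssim R (P 0) (P 1)))"

definition is_preorder_on :: "policy set \<Rightarrow> (policy \<Rightarrow> policy \<Rightarrow> bool) \<Rightarrow> bool" where
  "is_preorder_on A R \<longleftrightarrow> (\<forall>T\<in>A. R T T) \<and> (\<forall>S\<in>A. \<forall>T\<in>A. \<forall>U\<in>A. R S T \<and> R T U \<longrightarrow> R S U)"

end

theory Submission
  imports Defs
begin


definition bE :: "real \<Rightarrow> real" where "bE s = (1 - s^2) / (1 + s^2)"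
definition bI :: "real \<Rightarrow> real" where "bI s = 2 * s / (1 + s^2)"
definition bE' :: "real \<Rightarrow> real" where "bE' s = - 4 * s / (1 + s^2)^2"
definition bI' :: "real \<Rightarrow> real" where "bI' s = 2 * (1 - s^2) / (1 + s^2)^2"

definition beta :: "charac \<Rightarrow> real \<Rightarrow> real" where
  "beta k s = (case k of E \<Rightarrow> bE s | I \<Rightarrow> bI s | W \<Rightarrow> 0)"
definition beta' :: "charac \<Rightarrow> real \<Rightarrow> real" where
  "beta' k s = (case k of E \<Rightarrow> bE' s | I \<Rightarrow> bI' s | W \<Rightarrow> 0)"
definition sg :: "charac \<Rightarrow> real" where
  "sg k = (case k of E \<Rightarrow> 1 | I \<Rightarrow> -1 | W \<Rightarrow> 0)"
definition tau :: "charac \<Rightarrow> real \<Rightarrow> real \<Rightarrow> real" where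
  "tau k v s = sg k * v - (beta k s)^2 / 2"
definition alpha :: "charac \<Rightarrow> real \<Rightarrow> real \<Rightarrow> real" where
  "alpha k v s = tau k v s - beta k s * (1 - beta k s)"
definition pol :: "real \<Rightarrow> real \<Rightarrow> real \<Rightarrow> policy" where
  "pol zbar v s = (\<lambda>z k. if z \<in> {0..zbar} then alpha k v s + beta k s * z else 0)"

lemma pos1: "(1::real) + s^2 \<noteq> 0"
  by (smt (verit) zero_le_power2)

lemma bE_deriv: "(bE has_real_derivative bE' s) (at s)"
  unfolding bE_def bE'_def
  by (rule derivative_eq_intros refl | simp add: pos1)+ (simp add: field_simps power2_eq_square pos1; algebra)

lemma bI_deriv: "(bI has_real_derivative bI' s) (at s)"
  unfolding bI_def bI'_def
  by (rule derivative_eq_intros refl | simp add: pos1)+ (simp add: field_simps power2_eq_square pos1; algebra)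

lemma beta_deriv: "(beta k has_real_derivative beta' k s) (at s)"
proof -
  have "beta E = bE" "beta I = bI" "beta W = (\<lambda>_. 0)" by (auto simp: beta_def fun_eq_iff)
  then show ?thesis by (cases k) (auto simp: beta'_def bE_deriv bI_deriv)
qed

lemma beta_cont: "isCont (beta k) s"
  using beta_deriv DERIV_isCont by blast

lemma beta'_cont: "isCont (beta' k) s"
proof -
  have "beta' E = bE'" "beta' I = bI'" "beta' W = (\<lambda>_. 0)" by (auto simp: beta'_def fun_eq_iff)
  moreover have "isCont bE' s" "isCont bI' s" unfolding bE'_def bI'_def
    by (auto intro!: continuous_intros simp: pos1)
  ultimately show ?thesis by (cases k) auto
qed

lemma beta_sq: "(beta E s)^2 + (beta I s)^2 = 1"
proof -
  have p: "(1::real) + s^2 > 0" by (smt (verit) zero_le_power2)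
  have e1: "((1 - s^2) / (1 + s^2))^2 + (2 * s / (1 + s^2))^2 = ((1 - s^2)^2 + (2 * s)^2) / (1 + s^2)^2"
    by (simp add: power_divide add_divide_distrib)
  have e2: "(1 - s^2)^2 + (2 * s)^2 = (1 + s^2)^2" by algebra
  have e3: "(1 + s^2)^2 / (1 + s^2)^2 = 1" using p by simp
  have "((1 - s^2) / (1 + s^2))^2 + (2 * s / (1 + s^2))^2 = 1" using e1 e2 e3 by simp
  then show ?thesis by (simp add: beta_def bE_def bI_def)
qed

lemma beta_range: "0 \<le> s \<Longrightarrow> s \<le> 1 \<Longrightarrow> 0 \<le> beta k s \<and> beta k s \<le> 1"
proof (cases k)
  case E
  assume "0 \<le> s" "s \<le> 1"
  then have "s^2 \<le> 1" by (simp add: power_le_one)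
  have p: "(1::real) + s^2 > 0" by (smt (verit) zero_le_power2)
  then show ?thesis using E \<open>s^2 \<le> 1\<close> by (auto simp: beta_def bE_def divide_le_eq_1) 
next
  case I
  assume "0 \<le> s" "s \<le> 1"
  have "2 * s \<le> 1 + s^2" using sum_squares_ge_zero[of "s-1" 0] by (simp add: power2_eq_square algebra_simps)
  then show ?thesis using I \<open>0 \<le> s\<close> by (auto simp: beta_def bI_def pos1 field_simps add_pos_nonneg) 
qed (auto simp: beta_def)


lemma deriv_within_unique:
  assumes "zbar > 0" "z \<in> {0..zbar}"
    and "(f has_real_derivative d1) (at z within {0..zbar})"
    and "(f has_real_derivative d2) (at z within {0..zbar})"
  shows "d1 = d2"
  using vector_derivative_unique_within_closed_interval[of 0 zbar z f d1 d2] assms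
  by (simp add: has_real_derivative_iff_has_vector_derivative)

lemma affine_deriv_within:
  assumes "z \<in> {0..zbar}" "\<forall>y\<in>{0..zbar}. f y = c + d * y"
  shows "(f has_real_derivative d) (at z within {0..zbar})"
proof -
  have "((\<lambda>y. c + d * y) has_real_derivative d) (at z within {0..zbar})"
    by (rule derivative_eq_intros refl | simp)+
  then show ?thesis
    by (rule has_field_derivative_transform_within[where d=1]) (use assms in auto)
qed

lemma dZ_affine:
  assumes "zbar > 0" "z \<in> {0..zbar}" "\<forall>y\<in>{0..zbar}. f y = c + d * y"
  shows "dZ zbar f z = d"
proof -
  have D: "(f has_real_derivative d) (at z within {0..zbar})"
    using affine_deriv_within assms(2,3) by blast
  show ?thesis unfolding dZ_def
    by (rule some_equality) (use D deriv_within_unique[OF assms(1,2) _ D] in blast)+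
qed

lemma dZ2_affine:
  assumes "zbar > 0" "z \<in> {0..zbar}" "\<forall>y\<in>{0..zbar}. f y = c + d * y"
  shows "dZ zbar (dZ zbar f) z = 0"
proof -
  have "\<forall>y\<in>{0..zbar}. dZ zbar f y = d + 0 * y" using dZ_affine[OF assms(1) _ assms(3)] by simp
  then show ?thesis using dZ_affine[OF assms(1,2)] by blast
qed

lemma pol_policy: "is_policy zbar (pol zbar v s)"
  unfolding is_policy_def C2_on_def
proof (intro allI conjI impI)
  fix k
  show "\<exists>f' f''. (\<forall>z\<in>{0..zbar}. ((\<lambda>z. pol zbar v s z k) has_real_derivative f' z) (at z within {0..zbar})) \<and>
          (\<forall>z\<in>{0..zbar}. (f' has_real_derivative f'' z) (at z within {0..zbar})) \<and> continuous_on {0..zbar} f''"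
  proof (rule exI[of _ "\<lambda>_. beta k s"], rule exI[of _ "\<lambda>_. 0"], intro conjI ballI)
    fix z assume z: "z \<in> {0..zbar}"
    show "((\<lambda>z. pol zbar v s z k) has_real_derivative beta k s) (at z within {0..zbar})"
      by (rule affine_deriv_within[where c="alpha k v s"]) (use z in \<open>auto simp: pol_def\<close>)
    show "((\<lambda>_. beta k s) has_real_derivative 0) (at z within {0..zbar})"
      by (rule affine_deriv_within[where c="beta k s"]) (use z in \<open>auto\<close>)
  qed (rule continuous_on_const)
  show "pol zbar v s z k = 0" if "z \<notin> {0..zbar}" for z
    using that unfolding pol_def by (simp only: if_False)
qed

lemma pol_in_A:
  assumes "admissible zbar A" "0 \<le> s" "s \<le> 1"
  shows "pol zbar v s \<in> A"
proof -
  have "\<forall>k. \<exists>a b. 0 \<le> b \<and> b \<le> 1 \<and> (\<forall>z\<in>{0..zbar}. pol zbar v s z k = a + b * z)"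
    using beta_range[OF assms(2,3)] by (auto simp: pol_def)
  then show ?thesis using assms(1) pol_policy unfolding admissible_def by blast
qed

lemma pol_opt:
  assumes "zbar > 1" "0 \<le> s" "s \<le> 1"
  shows "is_opt zbar (pol zbar v s) k (1 - beta k s)"
    and "is_opt zbar (pol zbar v s) k z \<Longrightarrow> z = 1 - beta k s"
proof -
  let ?b = "beta k s"
  have br: "0 \<le> ?b" "?b \<le> 1" using beta_range[OF assms(2,3)] by auto
  have obj: "obj (pol zbar v s) k z = (1 - ?b) * z - alpha k v s - z^2/2" if "z \<in> {0..zbar}" for z
    using that by (simp add: obj_def pol_def vcost_def algebra_simps)
  have m: "1 - ?b \<in> {0..zbar}" using br assms(1) by auto
  have key: "obj (pol zbar v s) k z = obj (pol zbar v s) k (1 - ?b) - (z - (1 - ?b))^2 / 2"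
    if "z \<in> {0..zbar}" for z
    unfolding obj[OF that] obj[OF m] by (simp add: power2_eq_square field_simps)
  show "is_opt zbar (pol zbar v s) k (1 - ?b)"
    unfolding is_opt_def
  proof (intro conjI ballI m)
    fix z' assume z': "z' \<in> {0..zbar}"
    have "0 \<le> (z' - (1 - ?b))^2 / 2" by simp
    then show "obj (pol zbar v s) k z' \<le> obj (pol zbar v s) k (1 - ?b)" using key[OF z'] by linarith
  qed
  assume "is_opt zbar (pol zbar v s) k z"
  then have z: "z \<in> {0..zbar}" "obj (pol zbar v s) k (1 - ?b) \<le> obj (pol zbar v s) k z"
    using m unfolding is_opt_def by auto
  then have "(z - (1 - ?b))^2 / 2 \<le> 0" using key[OF z(1)] by linarith
  then show "z = 1 - ?b" by simp
qed

lemma pol_zopt: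
  assumes "zbar > 1" "0 \<le> s" "s \<le> 1"
  shows "zopt zbar (pol zbar v s) i = 1 - beta (xch i) s"
  unfolding zopt_def using pol_opt[OF assms] by (intro the_equality) auto

lemma pol_zopt_in:
  assumes "zbar > 1" "0 \<le> s" "s \<le> 1"
  shows "1 - beta k s \<in> {0..zbar}"
  using beta_range[OF assms(2,3), of k] assms(1) by auto

lemma pol_tax:
  assumes "zbar > 1" "0 \<le> s" "s \<le> 1"
  shows "pol zbar v s (zopt zbar (pol zbar v s) i) (xch i) = tau (xch i) v s"
proof -
  have "1 - beta (xch i) s \<in> {0..zbar}" by (rule pol_zopt_in[OF assms])
  then show ?thesis unfolding pol_zopt[OF assms] by (simp add: pol_def alpha_def algebra_simps)
qed

lemma pol_gw:
  assumes "zbar > 1" "0 \<le> s" "s \<le> 1"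
  shows "gw g zbar (pol zbar v s) i = g (tau (xch i) v s)"
  using pol_tax[OF assms] by (simp add: gw_def Let_def)

lemma integral_xch: fixes F :: "charac \<Rightarrow> real" shows "integral {0..1} (\<lambda>i. F (xch i)) = (F E + F I + F W) / 3"
proof -
  have c1: "((\<lambda>_. F E) has_integral (F E * (1/3))) {0::real..1/3}"
    using has_integral_const_real[of "F E" 0 "1/3"] by (simp add: mult.commute)
  have c2: "((\<lambda>_. F I) has_integral (F I * (1/3))) {1/3::real..2/3}"
    using has_integral_const_real[of "F I" "1/3" "2/3"] by (simp add: mult.commute)
  have c3: "((\<lambda>_. F W) has_integral (F W * (1/3))) {2/3::real..1}"
    using has_integral_const_real[of "F W" "2/3" 1] by (simp add: mult.commute)
  have 1: "((\<lambda>i. F (xch i)) has_integral (F E * (1/3))) {0::real..1/3}"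
    by (rule has_integral_spike_finite[where S="{1/3}", OF _ _ c1]) (simp_all add: xch_def)
  have 2: "((\<lambda>i. F (xch i)) has_integral (F I * (1/3))) {1/3::real..2/3}"
    by (rule has_integral_spike_finite[where S="{}", OF _ _ c2]) (simp_all add: xch_def)
  have 3: "((\<lambda>i. F (xch i)) has_integral (F W * (1/3))) {2/3::real..1}"
    by (rule has_integral_spike_finite[where S="{2/3}", OF _ _ c3]) (simp_all add: xch_def)
  have "((\<lambda>i. F (xch i)) has_integral (F E * (1/3) + F I * (1/3) + F W * (1/3))) {0..1}"
    by (rule has_integral_combine[OF _ _ has_integral_combine[OF _ _ 1 2] 3]) simp_all
  then have "integral {0..1} (\<lambda>i. F (xch i)) = F E * (1/3) + F I * (1/3) + F W * (1/3)"
    by (rule integral_unique)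
  then show ?thesis by simp
qed

lemma pol_revenue:
  assumes "zbar > 1" "0 \<le> s" "s \<le> 1"
  shows "revenue zbar (pol zbar v s) = - 1/6"
proof -
  have "revenue zbar (pol zbar v s) = integral {0..1} (\<lambda>i. tau (xch i) v s)"
    unfolding revenue_def using pol_tax[OF assms] by simp
  also have "... = (tau E v s + tau I v s + tau W v s) / 3" by (rule integral_xch)
  also have "... = - 1/6" using beta_sq[of s] by (simp add: tau_def sg_def beta_def[of W] field_simps)
  finally show ?thesis .
qed



lemma beta_chain[derivative_intros]:
  "(f has_real_derivative f') (at x within S) \<Longrightarrow>
   ((\<lambda>x. beta k (f x)) has_real_derivative (beta' k (f x) * f')) (at x within S)"
  by (rule DERIV_chain2[OF beta_deriv])

lemma beta_isCont[continuous_intros]: "isCont f x \<Longrightarrow> isCont (\<lambda>x. beta k (f x)) x"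
  by (rule isCont_o2[OF _ beta_cont])

lemma beta'_isCont[continuous_intros]: "isCont f x \<Longrightarrow> isCont (\<lambda>x. beta' k (f x)) x"
  by (rule isCont_o2[OF _ beta'_cont])

lemma beta_cont_on[continuous_intros]: "continuous_on S f \<Longrightarrow> continuous_on S (\<lambda>x. beta k (f x))"
  by (rule continuous_on_compose2[of UNIV "beta k" S f]) (auto intro!: continuous_at_imp_continuous_on beta_cont)

lemma beta'_cont_on[continuous_intros]: "continuous_on S f \<Longrightarrow> continuous_on S (\<lambda>x. beta' k (f x))"
  by (rule continuous_on_compose2[of UNIV "beta' k" S f]) (auto intro!: continuous_at_imp_continuous_on beta'_cont)

lemma time_deriv:
  assumes "z \<in> {0..zbar}"
  shows "((\<lambda>t. pol zbar (v0 + cv * t) (s0 + cs * t) z k) has_real_derivative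
          (sg k * cv + (beta k (s0 + cs * t) - 1 + z) * (beta' k (s0 + cs * t) * cs))) (at t)"
proof -
  have e: "(\<lambda>t. pol zbar (v0 + cv * t) (s0 + cs * t) z k) =
     (\<lambda>t. sg k * (v0 + cv * t) - (beta k (s0 + cs * t))^2 / 2 - beta k (s0 + cs * t) * (1 - beta k (s0 + cs * t))
          + beta k (s0 + cs * t) * z)"
    using assms by (simp add: pol_def alpha_def tau_def fun_eq_iff)
  show ?thesis unfolding e
    by (rule derivative_eq_intros refl | simp)+ (simp add: algebra_simps)
qed


lemma comp_snd_deriv:
  assumes "(H has_real_derivative D) (at (snd p))"
  shows "((\<lambda>q::real\<times>real. H (snd q)) has_derivative (\<lambda>h. D * snd h)) (at p within S)"
proof -
  have "(snd has_derivative snd) (at p within S)" by (rule bounded_linear_imp_has_derivative[OF bounded_linear_snd])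
  moreover have "(H has_derivative (\<lambda>x. D * x)) (at (snd p))" using assms by (simp add: has_field_derivative_def)
  ultimately show ?thesis by (rule has_derivative_compose)
qed

lemma joint_deriv:
  assumes "p \<in> {0..zbar} \<times> S"
  shows "((\<lambda>(z, t). pol zbar (v0 + cv * t) (s0 + cs * t) z k) has_derivative
     (\<lambda>(dz, dt). beta k (s0 + cs * snd p) * dz +
        (sg k * cv + (beta k (s0 + cs * snd p) - 1 + fst p) * (beta' k (s0 + cs * snd p) * cs)) * dt))
     (at p within {0..zbar} \<times> S)"
proof -
  define Hf where "Hf t = alpha k (v0 + cv * t) (s0 + cs * t)" for t
  define Kf where "Kf t = beta k (s0 + cs * t)" for t
  define H' where "H' = sg k * cv + (beta k (s0 + cs * snd p) - 1) * (beta' k (s0 + cs * snd p) * cs)"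
  define K' where "K' = beta' k (s0 + cs * snd p) * cs"
  have dH: "(Hf has_real_derivative H') (at (snd p))"
    unfolding Hf_def H'_def alpha_def tau_def
    by (rule derivative_eq_intros refl | simp)+ (simp add: algebra_simps)
  have dK: "(Kf has_real_derivative K') (at (snd p))"
    unfolding Kf_def K'_def
    by (rule derivative_eq_intros refl | simp)+
  have fstd: "(fst has_derivative fst) (at p within {0..zbar} \<times> S)"
    by (rule bounded_linear_imp_has_derivative[OF bounded_linear_fst])
  have "((\<lambda>q. Hf (snd q) + Kf (snd q) * fst q) has_derivative
      (\<lambda>h. H' * snd h + (Kf (snd p) * fst h + K' * snd h * fst p))) (at p within {0..zbar} \<times> S)"
    by (intro has_derivative_add has_derivative_mult comp_snd_deriv dH dK fstd)
  then have "((\<lambda>q. Hf (snd q) + Kf (snd q) * fst q) has_derivative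
     (\<lambda>(dz, dt). beta k (s0 + cs * snd p) * dz +
        (sg k * cv + (beta k (s0 + cs * snd p) - 1 + fst p) * (beta' k (s0 + cs * snd p) * cs)) * dt))
     (at p within {0..zbar} \<times> S)"
    by (rule has_derivative_eq_rhs) (auto simp: fun_eq_iff H'_def K'_def Kf_def algebra_simps)
  then show ?thesis
    by (rule has_derivative_transform_within[where d=1]) (use assms in \<open>auto simp: pol_def Hf_def Kf_def\<close>)
qed


definition hb :: "real \<Rightarrow> real \<Rightarrow> real \<Rightarrow> real \<Rightarrow> real \<Rightarrow> charac \<Rightarrow> real" where
  "hb zbar v' s' v s k = \<bar>alpha k v' s' - alpha k v s\<bar> + (zbar + 1) * \<bar>beta k s' - beta k s\<bar>"

lemma pdist_bound:
  assumes "zbar > 0"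
  shows "pdist zbar (pol zbar v' s') (pol zbar v s) \<le> hb zbar v' s' v s E + hb zbar v' s' v s I + hb zbar v' s' v s W"
proof -
  let ?T = "\<lambda>z k. pol zbar v' s' z k - pol zbar v s z k"
  let ?B = "hb zbar v' s' v s E + hb zbar v' s' v s I + hb zbar v' s' v s W"
  have hnn: "0 \<le> hb zbar v' s' v s k" for k using assms by (simp add: hb_def)
  have hle: "hb zbar v' s' v s k \<le> ?B" for k using hnn[of E] hnn[of I] hnn[of W] by (cases k) auto
  have aff: "\<forall>y\<in>{0..zbar}. ?T y k = (alpha k v' s' - alpha k v s) + (beta k s' - beta k s) * y" for k
    by (simp add: pol_def algebra_simps)
  have el: "\<bar>?T z k\<bar> + \<bar>dZ zbar (\<lambda>y. ?T y k) z\<bar> + \<bar>dZ zbar (dZ zbar (\<lambda>y. ?T y k)) z\<bar> \<le> ?B"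
    if z: "z \<in> {0..zbar}" for z k
  proof -
    have d1: "dZ zbar (\<lambda>y. ?T y k) z = beta k s' - beta k s" by (rule dZ_affine[OF assms z aff])
    have d2: "dZ zbar (dZ zbar (\<lambda>y. ?T y k)) z = 0" by (rule dZ2_affine[OF assms z aff])
    have "\<bar>(beta k s' - beta k s) * z\<bar> \<le> \<bar>beta k s' - beta k s\<bar> * zbar"
      using z by (auto simp: abs_mult intro!: mult_left_mono)
    then have "\<bar>?T z k\<bar> \<le> \<bar>alpha k v' s' - alpha k v s\<bar> + \<bar>beta k s' - beta k s\<bar> * zbar"
      using aff[of k] z by (simp add: abs_triangle_ineq order_trans[OF abs_triangle_ineq])
    then have "\<bar>?T z k\<bar> + \<bar>dZ zbar (\<lambda>y. ?T y k) z\<bar> + \<bar>dZ zbar (dZ zbar (\<lambda>y. ?T y k)) z\<bar> \<le> hb zbar v' s' v s k"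
      unfolding d1 d2 hb_def by (simp add: algebra_simps)
    then show ?thesis using hle[of k] by linarith
  qed
  show ?thesis unfolding pdist_def pnorm_def
  proof (rule cSup_least)
    show "{\<bar>?T z k\<bar> + \<bar>dZ zbar (\<lambda>y. ?T y k) z\<bar> + \<bar>dZ zbar (dZ zbar (\<lambda>y. ?T y k)) z\<bar> | z k. z \<in> {0..zbar}} \<noteq> {}"
    proof -
      have "(0::real) \<in> {0..zbar}" using assms by simp
      then show ?thesis by blast
    qed
  qed (use el in auto)
qed

lemma xch_cont:
  fixes Hc :: "charac \<Rightarrow> real"
  assumes "i0 \<noteq> 1/3" "i0 \<noteq> 2/3"
  shows "isCont (\<lambda>i. Hc (xch i)) i0"
proof -
  define d where "d = min \<bar>i0 - 1/3\<bar> \<bar>i0 - 2/3\<bar>"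
  have d: "d > 0" using assms by (simp add: d_def)
  have "\<forall>i. dist i i0 < d \<longrightarrow> xch i = xch i0"
    using assms by (auto simp: xch_def d_def dist_real_def)
  then have "eventually (\<lambda>i. Hc (xch i) = Hc (xch i0)) (nhds i0)"
    unfolding eventually_nhds_metric using d by metis
  then have "isCont (\<lambda>i. Hc (xch i)) i0 = isCont (\<lambda>i. Hc (xch i0)) i0" by (rule isCont_cong)
  then show ?thesis by simp
qed


lemma weff_formula:
  assumes zbar: "zbar > 1" and s: "0 \<le> s0 + cs * \<theta>'" "s0 + cs * \<theta>' \<le> 1"
  shows "weff g zbar (\<lambda>\<theta>. pol zbar (v0 + cv * \<theta>) (s0 + cs * \<theta>)) \<theta>' =
     (g (tau E (v0 + cv * \<theta>') (s0 + cs * \<theta>')) - g (tau I (v0 + cv * \<theta>') (s0 + cs * \<theta>'))) * cv / 3"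
proof -
  let ?v = "v0 + cv * \<theta>'" and ?s = "s0 + cs * \<theta>'"
  have int: "gw g zbar (pol zbar ?v ?s) i *
       deriv (\<lambda>t. pol zbar (v0 + cv * t) (s0 + cs * t) (zopt zbar (pol zbar ?v ?s) i) (xch i)) \<theta>'
     = g (tau (xch i) ?v ?s) * (sg (xch i) * cv)" for i
  proof -
    have zin: "1 - beta (xch i) ?s \<in> {0..zbar}" by (rule pol_zopt_in[OF zbar s])
    have "deriv (\<lambda>t. pol zbar (v0 + cv * t) (s0 + cs * t) (1 - beta (xch i) ?s) (xch i)) \<theta>' = sg (xch i) * cv"
      using DERIV_imp_deriv[OF time_deriv[OF zin, of v0 cv s0 cs "xch i" \<theta>']] by simp
    then show ?thesis unfolding pol_zopt[OF zbar s] pol_gw[OF zbar s] by simp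
  qed
  have "weff g zbar (\<lambda>\<theta>. pol zbar (v0 + cv * \<theta>) (s0 + cs * \<theta>)) \<theta>' =
      integral {0..1} (\<lambda>i. (\<lambda>k. g (tau k ?v ?s) * (sg k * cv)) (xch i))"
    unfolding weff_def int by simp
  also have "... = (g (tau E ?v ?s) - g (tau I ?v ?s)) * cv / 3"
    by (subst integral_xch) (simp add: sg_def algebra_simps add_divide_distrib diff_divide_distrib)
  finally show ?thesis .
qed

lemma cont_alpha: "isCont (\<lambda>t. alpha k (v0 + cv * t) (s0 + cs * t)) x"
proof -
  have "(\<lambda>t. alpha k (v0 + cv * t) (s0 + cs * t)) = (\<lambda>t. pol 0 (v0 + cv * t) (s0 + cs * t) 0 k)"
    by (simp add: pol_def fun_eq_iff)
  then show ?thesis using DERIV_isCont[OF time_deriv[of 0 0]] by simp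
qed

lemma cont_betat: "isCont (\<lambda>t. beta k (s0 + cs * t)) x"
  by (intro continuous_intros)

lemma cont_hb: "isCont (\<lambda>t. hb zbar (v0 + cv * t) (s0 + cs * t) v1 s1 k) x"
  unfolding hb_def by (intro continuous_intros cont_alpha cont_betat)

lemma path_lemma:
  assumes zbar: "zbar > 1" and A: "admissible zbar A"
    and srange: "\<forall>\<theta>\<in>{-1..2}. 0 \<le> s0 + cs * \<theta> \<and> s0 + cs * \<theta> \<le> 1"
  shows "is_path zbar A (-1) 2 (\<lambda>\<theta>. pol zbar (v0 + cv * \<theta>) (s0 + cs * \<theta>))"
  unfolding is_path_def
proof (intro conjI ballI allI impI)
  show "- 1 < (0::real)" "1 < (2::real)" by auto
  fix \<theta> :: real assume th: "\<theta> \<in> {-1..2}"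
  show "pol zbar (v0 + cv * \<theta>) (s0 + cs * \<theta>) \<in> A" using pol_in_A[OF A] srange th by blast
  show "revenue zbar (pol zbar (v0 + cv * \<theta>) (s0 + cs * \<theta>)) = revenue zbar (pol zbar (v0 + cv * 0) (s0 + cs * 0))"
  proof -
    have "0 \<le> s0" "s0 \<le> 1" using srange by (auto dest: bspec[of _ _ 0])
    then show ?thesis using pol_revenue[OF zbar] srange th by simp
  qed
  fix \<epsilon> :: real assume eps: "\<epsilon> > 0"
  define h where "h t = hb zbar (v0 + cv * t) (s0 + cs * t) (v0 + cv * \<theta>) (s0 + cs * \<theta>) E
     + hb zbar (v0 + cv * t) (s0 + cs * t) (v0 + cv * \<theta>) (s0 + cs * \<theta>) I
     + hb zbar (v0 + cv * t) (s0 + cs * t) (v0 + cv * \<theta>) (s0 + cs * \<theta>) W" for t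
  have "isCont h \<theta>" unfolding h_def by (intro continuous_add cont_hb)
  moreover have "h \<theta> = 0" by (simp add: h_def hb_def)
  ultimately obtain d where d: "d > 0" "\<forall>t. dist t \<theta> < d \<longrightarrow> dist (h t) 0 < \<epsilon>"
    using eps unfolding continuous_at_eps_delta by metis
  show "\<exists>\<delta>>0. \<forall>\<theta>'\<in>{- 1..2}. \<bar>\<theta>' - \<theta>\<bar> < \<delta> \<longrightarrow>
     pdist zbar (pol zbar (v0 + cv * \<theta>') (s0 + cs * \<theta>')) (pol zbar (v0 + cv * \<theta>) (s0 + cs * \<theta>)) < \<epsilon>"
  proof (intro exI[of _ d] conjI ballI impI d(1))
    fix t assume "t \<in> {-1..2}" "\<bar>t - \<theta>\<bar> < d"
    then have "h t < \<epsilon>" using d(2) by (auto simp: dist_real_def)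
    moreover have "pdist zbar (pol zbar (v0 + cv * t) (s0 + cs * t)) (pol zbar (v0 + cv * \<theta>) (s0 + cs * \<theta>)) \<le> h t"
      unfolding h_def by (rule pdist_bound) (use zbar in simp)
    ultimately show "pdist zbar (pol zbar (v0 + cv * t) (s0 + cs * t)) (pol zbar (v0 + cv * \<theta>) (s0 + cs * \<theta>)) < \<epsilon>"
      by linarith
  qed
next
  fix i :: real assume "i \<in> {0..1}"
  let ?k = "xch i"
  show "\<exists>fz ft. continuous_on ({0..zbar} \<times> {- 1..2}) fz \<and> continuous_on ({0..zbar} \<times> {- 1..2}) ft \<and>
          (\<forall>p\<in>{0..zbar} \<times> {- 1..2}.
              ((\<lambda>(z, t). pol zbar (v0 + cv * t) (s0 + cs * t) z (xch i)) has_derivative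
               (\<lambda>(dz, dt). fz p * dz + ft p * dt)) (at p within {0..zbar} \<times> {- 1..2}))"
  proof (intro exI conjI ballI)
    show "continuous_on ({0..zbar} \<times> {- 1..2}) (\<lambda>p. beta ?k (s0 + cs * snd p))"
      by (intro continuous_intros)
    show "continuous_on ({0..zbar} \<times> {- 1..2})
        (\<lambda>p. sg ?k * cv + (beta ?k (s0 + cs * snd p) - 1 + fst p) * (beta' ?k (s0 + cs * snd p) * cs))"
      by (intro continuous_intros)
    fix p assume "p \<in> {0..zbar} \<times> {-1..2::real}"
    from joint_deriv[OF this, of v0 cv s0 cs ?k]
    show "((\<lambda>(z, t). pol zbar (v0 + cv * t) (s0 + cs * t) z (xch i)) has_derivative
        (\<lambda>(dz, dt). (\<lambda>p. beta ?k (s0 + cs * snd p)) p * dz +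
           (\<lambda>p. sg ?k * cv + (beta ?k (s0 + cs * snd p) - 1 + fst p) * (beta' ?k (s0 + cs * snd p) * cs)) p * dt))
        (at p within {0..zbar} \<times> {- 1..2})" by simp
  qed
next
  fix \<theta> :: real assume "\<theta> \<in> {-1..2}"
  have "{i0 \<in> {0..1}. \<exists>z\<in>{0..zbar}. \<not> continuous (at i0 within {0..1})
          (\<lambda>i. deriv (\<lambda>t. pol zbar (v0 + cv * t) (s0 + cs * t) z (xch i)) \<theta>)} \<subseteq> {1/3, 2/3}"
  proof
    fix i0 assume "i0 \<in> {i0 \<in> {0..1}. \<exists>z\<in>{0..zbar}. \<not> continuous (at i0 within {0..1})
          (\<lambda>i. deriv (\<lambda>t. pol zbar (v0 + cv * t) (s0 + cs * t) z (xch i)) \<theta>)}"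
    then obtain z where nc: "\<not> continuous (at i0 within {0..1})
          (\<lambda>i. deriv (\<lambda>t. pol zbar (v0 + cv * t) (s0 + cs * t) z (xch i)) \<theta>)" by blast
    show "i0 \<in> {1/3, 2/3}"
    proof (rule ccontr)
      assume "i0 \<notin> {1/3, 2/3}"
      then have "isCont (\<lambda>i. (\<lambda>k. deriv (\<lambda>t. pol zbar (v0 + cv * t) (s0 + cs * t) z k) \<theta>) (xch i)) i0"
        by (intro xch_cont) auto
      then show False using nc continuous_at_imp_continuous_at_within by auto
    qed
  qed
  then show "finite {i0 \<in> {0..1}. \<exists>z\<in>{0..zbar}. \<not> continuous (at i0 within {0..1})
          (\<lambda>i. deriv (\<lambda>t. pol zbar (v0 + cv * t) (s0 + cs * t) z (xch i)) \<theta>)}"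
    by (rule finite_subset) simp
qed


lemma beta_vals: "beta E (1/3) = 4/5" "beta I (1/3) = 3/5" "beta E (1/2) = 3/5" "beta I (1/2) = 4/5"
  by (simp_all add: beta_def bE_def bI_def power2_eq_square)

lemma cycle_exists:
  assumes zbar: "zbar > 1" and A: "admissible zbar A"
    and g_deriv: "\<forall>t. \<exists>d>0. (g has_real_derivative d) (at t)"
    and rat: "rationalizes zbar A g R"
  shows "\<exists>T0\<in>A. \<exists>T1\<in>A. \<exists>T2\<in>A. \<exists>T3\<in>A.
              sprec R T0 T1 \<and> ssim R T1 T2 \<and> sprec R T2 T3 \<and> ssim R T3 T0"
proof -
  have gmono: "g a < g b" if "a < b" for a b
    using DERIV_pos_imp_increasing[OF that] g_deriv by blast
  have r: "\<And>a b P. is_path zbar A a b P \<Longrightarrow>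
      (weff g zbar P 0 < 0 \<longrightarrow>
         (\<exists>\<theta>b\<in>{0<..1}. \<forall>\<theta>\<in>{0<..<\<theta>b}. sprec R (P 0) (P \<theta>)))
    \<and> (weff g zbar P 0 > 0 \<longrightarrow>
         (\<exists>\<theta>b\<in>{0<..1}. \<forall>\<theta>\<in>{0<..<\<theta>b}. sprec R (P \<theta>) (P 0)))
    \<and> ((\<forall>\<theta>'\<in>{0..1}. weff g zbar P \<theta>' = 0) \<longrightarrow> ssim R (P 0) (P 1))"
    using rat unfolding rationalizes_def by blast
  define P1 where "P1 = (\<lambda>\<theta>. pol zbar (0 + 1 * \<theta>) (1/3 + 0 * \<theta>))"
  define P2 where "P2 = (\<lambda>\<theta>. pol zbar (0 + 1 * \<theta>) (1/2 + 0 * \<theta>))"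
  define Q where "Q = (\<lambda>\<delta> \<theta>. pol zbar (\<delta> + 0 * \<theta>) (1/3 + (1/6) * \<theta>))"
  have p1: "is_path zbar A (-1) 2 P1" unfolding P1_def by (rule path_lemma[OF zbar A]) auto
  have p2: "is_path zbar A (-1) 2 P2" unfolding P2_def by (rule path_lemma[OF zbar A]) auto
  have q: "is_path zbar A (-1) 2 (Q \<delta>)" for \<delta> unfolding Q_def by (rule path_lemma[OF zbar A]) auto
  have w1: "weff g zbar P1 0 < 0"
  proof -
    have "weff g zbar P1 0 = (g (tau E (0 + 1 * 0) (1/3 + 0 * 0)) - g (tau I (0 + 1 * 0) (1/3 + 0 * 0))) * 1 / 3"
      unfolding P1_def by (rule weff_formula[OF zbar]) simp_all
    then have "weff g zbar P1 0 = (g (tau E 0 (1/3)) - g (tau I 0 (1/3))) * 1 / 3" by simp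
    moreover have "tau E 0 (1/3) < tau I 0 (1/3)" by (simp add: tau_def beta_vals power2_eq_square)
    ultimately show ?thesis using gmono by fastforce
  qed
  have w2: "weff g zbar P2 0 > 0"
  proof -
    have "weff g zbar P2 0 = (g (tau E (0 + 1 * 0) (1/2 + 0 * 0)) - g (tau I (0 + 1 * 0) (1/2 + 0 * 0))) * 1 / 3"
      unfolding P2_def by (rule weff_formula[OF zbar]) simp_all
    then have "weff g zbar P2 0 = (g (tau E 0 (1/2)) - g (tau I 0 (1/2))) * 1 / 3" by simp
    moreover have "tau I 0 (1/2) < tau E 0 (1/2)" by (simp add: tau_def beta_vals power2_eq_square)
    ultimately show ?thesis using gmono by fastforce
  qed
  have wq: "\<forall>\<theta>'\<in>{0..1}. weff g zbar (Q \<delta>) \<theta>' = 0" for \<delta>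
  proof
    fix \<theta>' :: real assume "\<theta>' \<in> {0..1}"
    then have "0 \<le> 1/3 + 1/6 * \<theta>'" "1/3 + 1/6 * \<theta>' \<le> 1" by auto
    then have "weff g zbar (Q \<delta>) \<theta>' = (g (tau E (\<delta> + 0 * \<theta>') (1/3 + (1/6) * \<theta>')) -
        g (tau I (\<delta> + 0 * \<theta>') (1/3 + (1/6) * \<theta>'))) * 0 / 3"
      unfolding Q_def by (intro weff_formula[OF zbar])
    then show "weff g zbar (Q \<delta>) \<theta>' = 0" by simp
  qed
  obtain b1 where b1: "b1 \<in> {0<..1}" "\<forall>\<theta>\<in>{0<..<b1}. sprec R (P1 0) (P1 \<theta>)"
    using r[OF p1] w1 by blast
  obtain b2 where b2: "b2 \<in> {0<..1}" "\<forall>\<theta>\<in>{0<..<b2}. sprec R (P2 \<theta>) (P2 0)"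
    using r[OF p2] w2 by (meson less_asym)
  define \<delta> where "\<delta> = min b1 b2 / 2"
  have d1: "\<delta> \<in> {0<..<b1}" "\<delta> \<in> {0<..<b2}" using b1(1) b2(1) by (auto simp: \<delta>_def)
  have s1: "sprec R (pol zbar 0 (1/3)) (pol zbar \<delta> (1/3))" using b1(2) d1(1) by (simp add: P1_def)
  have s2: "sprec R (pol zbar \<delta> (1/2)) (pol zbar 0 (1/2))" using b2(2) d1(2) by (simp add: P2_def)
  have e1: "ssim R (pol zbar \<delta> (1/3)) (pol zbar \<delta> (1/2))"
    using r[OF q[of \<delta>]] wq[of \<delta>] by (simp add: Q_def)
  have e2: "ssim R (pol zbar 0 (1/3)) (pol zbar 0 (1/2))"
    using r[OF q[of 0]] wq[of 0] by (simp add: Q_def)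
  then have e2': "ssim R (pol zbar 0 (1/2)) (pol zbar 0 (1/3))" by (auto simp: ssim_def)
  have inA: "pol zbar v (1/3) \<in> A" "pol zbar v (1/2) \<in> A" for v
    using pol_in_A[OF A] by auto
  show ?thesis using s1 e1 s2 e2' inA by blast
qed

lemma no_preorder:
  assumes "\<And>R. rationalizes zbar A g R \<Longrightarrow> (\<exists>T0\<in>A. \<exists>T1\<in>A. \<exists>T2\<in>A. \<exists>T3\<in>A.
              sprec R T0 T1 \<and> ssim R T1 T2 \<and> sprec R T2 T3 \<and> ssim R T3 T0)"
  shows "\<not> (\<exists>R. is_preorder_on A R \<and> rationalizes zbar A g R)"
proof
  assume "\<exists>R. is_preorder_on A R \<and> rationalizes zbar A g R"
  then obtain R where pre: "is_preorder_on A R" and rat: "rationalizes zbar A g R" by blast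
  from assms[OF rat] obtain T0 T1 T2 T3 where T: "T0 \<in> A" "T1 \<in> A" "T2 \<in> A" "T3 \<in> A"
    and c: "sprec R T0 T1" "ssim R T1 T2" "sprec R T2 T3" "ssim R T3 T0" by blast
  have tr: "\<And>S T U. S \<in> A \<Longrightarrow> T \<in> A \<Longrightarrow> U \<in> A \<Longrightarrow> R S T \<Longrightarrow> R T U \<Longrightarrow> R S U"
    using pre unfolding is_preorder_on_def by blast
  have "R T1 T2" "R T2 T3" "R T3 T0" using c by (auto simp: sprec_def ssim_def)
  then have "R T1 T0" using tr T by metis
  then show False using c(1) by (simp add: sprec_def)
qed


theorem proposition6:
  fixes zbar :: real and A :: "policy set" and g :: "real \<Rightarrow> real" and u :: "real \<Rightarrow> real"
  assumes zbar: "zbar > 1"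
    and u_mono: "strict_mono u" and u_concave: "concave_on UNIV u"
    and u_C2: "\<exists>u' u''. (\<forall>y. (u has_real_derivative u' y) (at y))
                  \<and> (\<forall>y. (u' has_real_derivative u'' y) (at y)) \<and> continuous_on UNIV u''"
    and A: "admissible zbar A"
    and g_pos: "\<forall>t. g t > 0"
    and g_deriv: "\<forall>t. \<exists>d>0. (g has_real_derivative d) (at t)"
  shows "\<not> (\<exists>R. is_preorder_on A R \<and> rationalizes zbar A g R) \<and>
         (\<forall>R. rationalizes zbar A g R \<longrightarrow>
           (\<exists>T0\<in>A. \<exists>T1\<in>A. \<exists>T2\<in>A. \<exists>T3\<in>A.
              sprec R T0 T1 \<and> ssim R T1 T2 \<and> sprec R T2 T3 \<and> ssim R T3 T0))"
proof -
  have cyc: "\<And>R. rationalizes zbar A g R \<Longrightarrow> (\<exists>T0\<in>A. \<exists>T1\<in>A. \<exists>T2\<in>A. \<exists>T3\<in>A.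
              sprec R T0 T1 \<and> ssim R T1 T2 \<and> sprec R T2 T3 \<and> ssim R T3 T0)"
    by (rule cycle_exists[OF zbar A g_deriv])
  show ?thesis using no_preorder[OF cyc] cyc by blast
qed

end
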